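(* Let $K\subset\mathbb{R}^n$ be a nonempty convex set and $c>0$ fixed. Then the function $\varepsilon\mapsto M^{\operatorname{loc}}(\varepsilon)$ on $(0,\infty)$ is monotone non-increasing.
   Context: $B(\theta,r)$ is the closed Euclidean ball. $M(\delta,S)$ is the largest cardinality of a $\delta$-packing of $S$ (distinct points at Euclidean distance $\ge\delta$); $M^{\operatorname{loc}}(\varepsilon)=\sup_{\theta\in K}M(\varepsilon/c,B(\theta,\varepsilon)\cap K)$. *)

theory Defs
  imports "HOL-Analysis.Analysis" "HOL-Library.Extended_Nat"
begin

definition is_packing :: "real \<Rightarrow> 'a::euclidean_space set \<Rightarrow> 'a set \<Rightarrow> bool" where
  "is_packing \<delta> S P \<longleftrightarrow> finite P \<and> P \<subseteq> S \<and>
     (\<forall>x\<in>P. \<forall>y\<in>P. x \<noteq> y \<longrightarrow> dist x y \<ge> \<delta>)"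

definition packing_number :: "real \<Rightarrow> 'a::euclidean_space set \<Rightarrow> enat" where
  "packing_number \<delta> S = (SUP P\<in>{P. is_packing \<delta> S P}. enat (card P))"

definition local_packing :: "'a::euclidean_space set \<Rightarrow> real \<Rightarrow> real \<Rightarrow> enat" where
  "local_packing K c \<epsilon> = (SUP \<theta>\<in>K. packing_number (\<epsilon> / c) (cball \<theta> \<epsilon> \<inter> K))"

end

theory Submission
  imports Defs
begin

lemma scale_packing:
  fixes K :: "'a::euclidean_space set" and c :: real
  assumes K: "convex K" and c: "c > 0" and th: "\<theta> \<in> K"
    and e1: "0 < e1" and e12: "e1 \<le> e2"
    and P: "is_packing (e2 / c) (cball \<theta> e2 \<inter> K) P"
  shows "enat (card P) \<le> packing_number (e1 / c) (cball \<theta> e1 \<inter> K)"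
proof -
  define t where "t = e1 / e2"
  have e2: "0 < e2" using e1 e12 by linarith
  have t0: "0 < t" and t1: "t \<le> 1" using e1 e2 e12 by (auto simp: t_def)
  define f where "f x = \<theta> + t *\<^sub>R (x - \<theta>)" for x
  have fd: "dist (f x) (f y) = t * dist x y" for x y
  proof -
    have "f x - f y = t *\<^sub>R (x - y)" by (simp add: f_def algebra_simps)
    then show ?thesis using t0 by (simp add: dist_norm)
  qed
  have fa: "f x = (1 - t) *\<^sub>R \<theta> + t *\<^sub>R x" for x by (simp add: f_def algebra_simps)
  have fth: "dist \<theta> (f x) = t * dist \<theta> x" for x
  proof -
    have "f \<theta> = \<theta>" by (simp add: f_def)
    then show ?thesis using fd[of \<theta> x] by simp
  qed
  have inj: "inj_on f P"
    by (rule inj_onI) (metis fd t0 dist_eq_0_iff mult_eq_0_iff less_irrefl)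
  have Pp: "finite P" "P \<subseteq> cball \<theta> e2 \<inter> K"
    "\<And>x y. x\<in>P \<Longrightarrow> y\<in>P \<Longrightarrow> x \<noteq> y \<Longrightarrow> dist x y \<ge> e2 / c"
    using P by (auto simp: is_packing_def)
  have "is_packing (e1 / c) (cball \<theta> e1 \<inter> K) (f ` P)"
    unfolding is_packing_def
  proof (intro conjI ballI impI)
    show "finite (f ` P)" using Pp by simp
    show "f ` P \<subseteq> cball \<theta> e1 \<inter> K"
    proof
      fix z assume "z \<in> f ` P"
      then obtain x where x: "x \<in> P" "z = f x" by blast
      have xK: "x \<in> K" "dist \<theta> x \<le> e2" using Pp x by auto
      have "f x \<in> K" unfolding fa using K th xK t0 t1
        by (simp add: convex_alt)
      moreover have "t * dist \<theta> x \<le> t * e2" using xK t0 by simp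
      then have "dist \<theta> (f x) \<le> e1" using fth[of x] e2 by (simp add: t_def)
      ultimately show "z \<in> cball \<theta> e1 \<inter> K" using x by simp
    qed
    fix a b assume ab: "a \<in> f ` P" "b \<in> f ` P" "a \<noteq> b"
    then obtain x y where xy: "x \<in> P" "y \<in> P" "a = f x" "b = f y" by blast
    then have "x \<noteq> y" using ab by auto
    then have "dist x y \<ge> e2 / c" using Pp xy by auto
    then have "t * dist x y \<ge> t * (e2 / c)" using t0 mult_left_mono[of "e2 / c" "dist x y" t] by simp
    moreover have "t * (e2 / c) = e1 / c" using e2 by (simp add: t_def)
    moreover have "dist a b = t * dist x y" using xy fd by simp
    ultimately show "dist a b \<ge> e1 / c" by linarith
  qed
  then have "enat (card (f ` P)) \<le> packing_number (e1 / c) (cball \<theta> e1 \<inter> K)"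
    unfolding packing_number_def by (intro SUP_upper) auto
  then show ?thesis using card_image[OF inj] by simp
qed

theorem mainTheorem7:
  fixes K :: "'a::euclidean_space set" and c :: real
  assumes "K \<noteq> {}" and "convex K" and "c > 0"
  shows "\<forall>\<epsilon>1 \<epsilon>2. 0 < \<epsilon>1 \<longrightarrow> \<epsilon>1 \<le> \<epsilon>2 \<longrightarrow> local_packing K c \<epsilon>2 \<le> local_packing K c \<epsilon>1"
proof (intro allI impI)
  fix e1 e2 :: real assume e: "0 < e1" "e1 \<le> e2"
  show "local_packing K c e2 \<le> local_packing K c e1"
    unfolding local_packing_def
  proof (rule SUP_least)
    fix \<theta> assume th: "\<theta> \<in> K"
    have "packing_number (e2 / c) (cball \<theta> e2 \<inter> K) \<le> packing_number (e1 / c) (cball \<theta> e1 \<inter> K)"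
      unfolding packing_number_def[of "e2/c"]
      by (rule SUP_least) (use scale_packing[OF assms(2,3) th e] in auto)
    also have "\<dots> \<le> (SUP \<theta>\<in>K. packing_number (e1 / c) (cball \<theta> e1 \<inter> K))"
      using th by (rule SUP_upper)
    finally show "packing_number (e2 / c) (cball \<theta> e2 \<inter> K) \<le> (SUP \<theta>\<in>K. packing_number (e1 / c) (cball \<theta> e1 \<inter> K))" .
  qed
qed

end
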